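(* For $a,b>0$, $\lambda\ge0$ and $0<x<1$, $$e^{-\lambda}x^a(1-x)^b\sum_{n=0}^\infty\frac{\Gamma(a+b+n)}{\Gamma(b)\Gamma(a+1+n)}x^n\sum_{j=0}^n\frac{\lambda^j}{j!}=B_{a,b}(2\lambda,x).$$
   Context: For $p,q>0$ and $0\le y\le 1$, $I_y(p,q)=\frac{1}{B(p,q)}\int_0^y t^{p-1}(1-t)^{q-1}\,dt$ is the regularized incomplete beta function, with $B(p,q)=\Gamma(p)\Gamma(q)/\Gamma(p+q)$. The cumulative noncentral beta distribution is $B_{p,q}(x,y)=e^{-x/2}\sum_{j=0}^\infty \frac{1}{j!}\left(\frac x2\right)^j I_y(p+j,q)$ for $x\ge0$. *)

theory Defs
  imports "HOL-Analysis.Analysis"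
begin

definition inc_beta_reg :: "real \<Rightarrow> real \<Rightarrow> real \<Rightarrow> real" where
  "inc_beta_reg y p q =
     integral {0..y} (\<lambda>t. t powr (p - 1) * (1 - t) powr (q - 1)) / Beta p q"

definition noncentral_beta :: "real \<Rightarrow> real \<Rightarrow> real \<Rightarrow> real \<Rightarrow> real" where
  "noncentral_beta p q x y =
     exp (- x / 2) * (\<Sum>j. (1 / fact j) * (x / 2) ^ j * inc_beta_reg y (p + real j) q)"

end

theory Submission
  imports Defs
begin

definition dco :: "real \<Rightarrow> real \<Rightarrow> nat \<Rightarrow> real" where
  "dco p q m = Gamma (p+q+real m)/(Gamma q * Gamma (p+1+real m))"
definition eco :: "real \<Rightarrow> real \<Rightarrow> nat \<Rightarrow> real" where
  "eco p q m = Gamma (p+q+real m)/(Gamma q * Gamma (p+real m))"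

lemma Gamma_plus1_pos: "(z::real) > 0 \<Longrightarrow> Gamma (z + 1) = z * Gamma z"
  by (rule Gamma_plus1) (auto elim!: nonpos_Ints_cases)

lemma aux: "a \<noteq> 0 \<Longrightarrow> (a::real) * (x / (y * (a * z))) = x / (y * z)"
  by simp

lemma eco_dco: assumes "p > 0" "q > 0" shows "eco p q m = (p + real m) * dco p q m"
proof -
  have h: "Gamma (p+1+real m) = (p + real m) * Gamma (p + real m)"
    using Gamma_plus1_pos[of "p + real m"] assms by (simp add: algebra_simps)
  have "p + real m \<noteq> 0" using assms by auto
  then show ?thesis unfolding eco_def dco_def h by (rule aux[symmetric])
qed

lemma eco_Suc: assumes "p > 0" "q > 0" shows "eco p q (Suc m) = (p + q + real m) * dco p q m"
proof -
  have "Gamma (p+q+real (Suc m)) = (p + q + real m) * Gamma (p + q + real m)"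
    using Gamma_plus1_pos[of "p + q + real m"] assms by (simp add: algebra_simps)
  moreover have "p + real (Suc m) = p + 1 + real m" by simp
  ultimately show ?thesis unfolding eco_def dco_def using assms
    by (simp add: field_simps)
qed

lemma dco_Suc: assumes "p > 0" "q > 0"
  shows "dco p q (Suc m) = (p + q + real m) / (p + 1 + real m) * dco p q m"
proof -
  have "Gamma (p+q+real (Suc m)) = (p + q + real m) * Gamma (p + q + real m)"
    using Gamma_plus1_pos[of "p + q + real m"] assms by (simp add: algebra_simps)
  moreover have "Gamma (p+1+real (Suc m)) = (p + 1 + real m) * Gamma (p + 1 + real m)"
    using Gamma_plus1_pos[of "p + 1 + real m"] assms by (simp add: algebra_simps)
  moreover have "Gamma (p + 1 + real m) > 0" "Gamma q > 0" using assms by auto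
  ultimately show ?thesis unfolding dco_def using assms
    by (simp add: field_simps)
qed

lemma dco_pos: "p > 0 \<Longrightarrow> q > 0 \<Longrightarrow> dco p q m > 0"
  unfolding dco_def by auto

lemma dco_summable: assumes "p > 0" "q > 0" "norm (y::real) < 1"
  shows "summable (\<lambda>m. dco p q m * y ^ m)"
proof -
  define c where "c = (1 + \<bar>y\<bar>) / 2"
  have c: "c < 1" "\<bar>y\<bar> < c" using assms(3) by (auto simp: c_def)
  obtain N :: nat where N: "(p+q) / (c - \<bar>y\<bar>) < real N" using reals_Archimedean2 by blast
  show ?thesis
  proof (rule summable_ratio_test[OF c(1), of N])
    fix n assume n: "N \<le> n"
    have "(p+q) / (c - \<bar>y\<bar>) < real n" using N n by linarith
    hence "p + q < real n * (c - \<bar>y\<bar>)" using c by (simp add: field_simps)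
    hence key: "(p + q + real n) * \<bar>y\<bar> \<le> c * (p + 1 + real n)"
    proof -
      have y1: "\<bar>y\<bar> \<le> 1" using assms(3) by simp
      have "(p + q) * \<bar>y\<bar> \<le> (p+q)" using y1 assms(1,2) by (simp add: mult_left_le)
      moreover have "c * (p + 1) \<ge> 0" using c assms(1) by simp
      ultimately show ?thesis using \<open>p + q < real n * (c - \<bar>y\<bar>)\<close>
        by (simp add: algebra_simps)
    qed
    have "norm (dco p q (Suc n) * y ^ Suc n) = (p + q + real n) / (p + 1 + real n) * \<bar>y\<bar> * (dco p q n * \<bar>y\<bar> ^ n)"
      using dco_pos[OF assms(1,2)] assms by (simp add: dco_Suc abs_mult power_abs abs_of_pos[OF dco_pos[OF assms(1,2)]])
    also have "\<dots> \<le> c * (dco p q n * \<bar>y\<bar> ^ n)"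
    proof (rule mult_right_mono)
      show "(p + q + real n) / (p + 1 + real n) * \<bar>y\<bar> \<le> c"
        using key assms by (simp add: field_simps)
    qed (use dco_pos[OF assms(1,2), of n] in \<open>auto intro!: mult_nonneg_nonneg\<close>)
    also have "\<dots> = c * norm (dco p q n * y ^ n)"
      using dco_pos[OF assms(1,2)] by (simp add: abs_mult power_abs abs_of_pos[OF dco_pos[OF assms(1,2)]])
    finally show "norm (dco p q (Suc n) * y ^ Suc n) \<le> c * norm (dco p q n * y ^ n)" .
  qed
qed

definition Sser :: "real \<Rightarrow> real \<Rightarrow> real \<Rightarrow> real" where
  "Sser p q t = (\<Sum>m. dco p q m * t ^ m)"

lemma key_identity:
  assumes p: "p > 0" and q: "q > 0" and y: "norm (y::real) < 1"
  shows "p*(1-y)*Sser p q y - q*y*Sser p q y + y*(1-y)*(\<Sum>m. diffs (dco p q) m * y^m) = 1 / Beta p q"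
proof -
  define S where "S = Sser p q y"
  define S' where "S' = (\<Sum>m. diffs (dco p q) m * y^m)"
  have sS: "(\<lambda>m. dco p q m * y^m) sums S"
    unfolding S_def Sser_def using dco_summable[OF p q y] by (rule summable_sums)
  have "summable (\<lambda>m. diffs (dco p q) m * y^m)"
    by (rule termdiff_converges[of y 1]) (use y dco_summable[OF p q] in auto)
  hence sD: "(\<lambda>m. diffs (dco p q) m * y^m) sums S'" unfolding S'_def by (rule summable_sums)
  have "(\<lambda>m. (\<lambda>m. real m * dco p q m * y^m) (Suc m)) sums (y*S')"
  proof -
    have "(\<lambda>m. y * (diffs (dco p q) m * y^m)) sums (y*S')" by (rule sums_mult[OF sD])
    thus ?thesis by (simp add: diffs_def algebra_simps)
  qed
  hence s1: "(\<lambda>m. real m * dco p q m * y^m) sums (y*S')"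
    by (subst (asm) sums_Suc_iff) simp
  have sA: "(\<lambda>m. eco p q m * y^m) sums (p*S + y*S')"
  proof -
    have "(\<lambda>m. p * (dco p q m * y^m) + real m * dco p q m * y^m) sums (p*S + y*S')"
      by (intro sums_add sums_mult sS s1)
    thus ?thesis by (simp add: eco_dco[OF p q] algebra_simps)
  qed
  have "(\<lambda>m. eco p q (Suc m) * y^(Suc m)) sums (y*((p+q)*S + y*S'))"
  proof -
    have "(\<lambda>m. y * ((p+q) * (dco p q m * y^m) + real m * dco p q m * y^m)) sums (y*((p+q)*S + y*S'))"
      by (intro sums_add sums_mult sS s1)
    thus ?thesis by (simp add: eco_Suc[OF p q] algebra_simps)
  qed
  hence "(\<lambda>m. eco p q m * y^m) sums (y*((p+q)*S + y*S') + eco p q 0)"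
    by (subst (asm) sums_Suc_iff) simp
  with sA have eq: "p*S + y*S' = y*((p+q)*S + y*S') + eco p q 0"
    by (rule sums_unique2)
  have "eco p q 0 = 1 / Beta p q"
    unfolding eco_def Beta_def by (simp add: add.commute)
  with eq show ?thesis unfolding S_def[symmetric] S'_def[symmetric]
    by (simp add: algebra_simps)
qed

lemma Sser_deriv:
  assumes p: "p > 0" and q: "q > 0" and y: "norm (y::real) < 1"
  shows "(Sser p q has_real_derivative (\<Sum>m. diffs (dco p q) m * y^m)) (at y)"
  unfolding Sser_def[abs_def]
  by (rule termdiffs_strong'[of 1]) (use y dco_summable[OF p q] in auto)

lemma G_deriv:
  assumes p: "p > 0" and q: "q > 0" and t: "0 < t" "t < (1::real)"
  shows "((\<lambda>t. Beta p q * (t powr p * (1-t) powr q * Sser p q t)) has_real_derivative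
           t powr (p-1) * (1-t) powr (q-1)) (at t)"
proof -
  define S' where "S' = (\<Sum>m. diffs (dco p q) m * t^m)"
  have nt: "norm t < 1" using t by simp
  have dS: "(Sser p q has_real_derivative S') (at t)" unfolding S'_def by (rule Sser_deriv[OF p q nt])
  have d1: "((\<lambda>t. t powr p) has_real_derivative p * t powr (p-1)) (at t)"
    by (rule has_real_derivative_powr) (use t in simp)
  have d2: "((\<lambda>t. (1-t) powr q) has_real_derivative q * (1-t) powr (q-1) * (-1)) (at t)"
    by (rule DERIV_chain2[OF has_real_derivative_powr]) (use t in \<open>auto intro!: derivative_eq_intros\<close>)
  have D: "((\<lambda>t. Beta p q * (t powr p * (1-t) powr q * Sser p q t)) has_real_derivative
     Beta p q * (t powr p * (1-t) powr q * S' + (t powr p * (q * (1-t) powr (q-1) * (-1)) + p * t powr (p-1) * (1-t) powr q) * Sser p q t)) (at t)"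
    by (rule DERIV_cmult[OF DERIV_mult'[OF DERIV_mult'[OF d1 d2] dS]])
  define u where "u = t powr (p-1)"
  define v where "v = (1-t) powr (q-1)"
  have tu: "t powr p = t * u" unfolding u_def using t
    using powr_add[of t "p-1" 1] by simp
  have tv: "(1-t) powr q = (1-t) * v" unfolding v_def using t
    using powr_add[of "1-t" "q-1" 1] by simp
  have K: "p*(1-t)*Sser p q t - q*t*Sser p q t + t*(1-t)*S' = 1 / Beta p q"
    unfolding S'_def by (rule key_identity[OF p q nt])
  have "Beta p q > 0" unfolding Beta_def
    by (intro divide_pos_pos mult_pos_pos Gamma_real_pos) (use p q in auto)
  hence B: "Beta p q \<noteq> 0" by simp
  have "Beta p q * ((t*u) * ((1-t)* v) * S' + ((t*u) * (q * v * (-1)) + p * u * ((1-t)* v)) * Sser p q t)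
        = Beta p q * u * v * (p*(1-t)*Sser p q t - q*t*Sser p q t + t*(1-t)*S')"
    by (simp add: algebra_simps)
  also have "\<dots> = u * v" using K B by simp
  finally have E: "Beta p q * ((t*u) * ((1-t)* v) * S' + ((t*u) * (q * v * (-1)) + p * u * ((1-t)* v)) * Sser p q t) = u * v" .
  show ?thesis using D unfolding tu tv E u_def[symmetric] v_def[symmetric] .
qed

lemma inc_beta_series:
  assumes p: "p > 0" and q: "q > 0" and y: "0 < y" "y < (1::real)"
  shows "integral {0..y} (\<lambda>t. t powr (p-1) * (1-t) powr (q-1)) = Beta p q * (y powr p * (1-y) powr q * Sser p q y)"
proof -
  define G where "G = (\<lambda>t. Beta p q * (t powr p * (1-t) powr q * Sser p q t))"
  have cS: "continuous_on {0..y} (Sser p q)"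
  proof (rule continuous_at_imp_continuous_on, intro ballI)
    fix t assume "t \<in> {0..y}"
    hence "norm t < 1" using y by auto
    thus "isCont (Sser p q) t" using Sser_deriv[OF p q] by (blast intro: DERIV_isCont)
  qed
  have c1: "continuous_on {0..y} (\<lambda>t::real. t powr p)"
    by (rule continuous_on_powr') (use p in \<open>auto intro: continuous_intros\<close>)
  have c2: "continuous_on {0..y} (\<lambda>t::real. (1-t) powr q)"
    by (rule continuous_on_powr') (use p y in \<open>auto intro!: continuous_intros\<close>)
  have cG: "continuous_on {0..y} G" unfolding G_def
    by (intro continuous_on_mult continuous_on_const c1 c2 cS)
  have "((\<lambda>t. t powr (p-1) * (1-t) powr (q-1)) has_integral (G y - G 0)) {0..y}"
  proof (rule fundamental_theorem_of_calculus_interior)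
    fix t assume "t \<in> {0<..<y}"
    hence "0 < t" "t < 1" using y by auto
    thus "(G has_vector_derivative t powr (p-1) * (1-t) powr (q-1)) (at t)"
      unfolding G_def has_real_derivative_iff_has_vector_derivative[symmetric]
      by (rule G_deriv[OF p q])
  qed (use y cG in auto)
  moreover have "G 0 = 0" unfolding G_def by simp
  ultimately show ?thesis unfolding G_def by (simp add: integral_unique)
qed

lemma swap_sums:
  fixes f g :: "nat \<Rightarrow> real"
  assumes f0: "\<And>j. f j \<ge> 0" and g0: "\<And>n. g n \<ge> 0" and sg: "summable g"
    and sm: "summable (\<lambda>n. g n * (\<Sum>j\<le>n. f j))"
  shows "(\<lambda>j. f j * (\<Sum>m. g (j+m))) sums (\<Sum>n. g n * (\<Sum>j\<le>n. f j))"
proof -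
  define L where "L = (\<Sum>n. g n * (\<Sum>j\<le>n. f j))"
  define h where "h = (\<lambda>(n::nat,j::nat). g n * f j)"
  have inner: "((\<lambda>j. h (n,j)) has_sum g n * (\<Sum>j\<le>n. f j)) {..n}" for n
    by (rule has_sum_finiteI) (auto simp: h_def sum_distrib_left)
  have outer: "((\<lambda>n. g n * (\<Sum>j\<le>n. f j)) has_sum L) UNIV"
    unfolding L_def using sm
    by (intro sums_nonneg_imp_has_sum summable_sums) (auto intro!: mult_nonneg_nonneg sum_nonneg f0 g0)
  have "h summable_on Sigma UNIV (\<lambda>n. {..n})"
    by (rule summable_on_SigmaI[OF inner has_sum_imp_summable[OF outer]])
       (auto simp: h_def intro!: mult_nonneg_nonneg f0 g0)
  hence hs: "(h has_sum L) (Sigma UNIV (\<lambda>n. {..n}))"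
    by (rule has_sum_SigmaI[OF inner outer])
  have hs': "((\<lambda>(j,n). g n * f j) has_sum L) (Sigma UNIV (\<lambda>j. {j..}))"
    using hs by (subst has_sum_reindex_bij_witness[where i=prod.swap and j=prod.swap and T="Sigma UNIV (\<lambda>n. {..n})" and h=h])
                (auto simp: h_def)
  have inner2: "((\<lambda>n. g n * f j) has_sum f j * (\<Sum>m. g (j+m))) {j..}" for j
  proof -
    have "summable (\<lambda>m. g (m + j))" using sg by (rule summable_ignore_initial_segment)
    hence "(\<lambda>m. g (j + m)) sums (\<Sum>m. g (j+m))" by (simp add: add.commute summable_sums)
    hence "((\<lambda>m. g (j + m)) has_sum (\<Sum>m. g (j+m))) UNIV"
      by (rule sums_nonneg_imp_has_sum) (rule g0)
    hence "(g has_sum (\<Sum>m. g (j+m))) {j..}"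
      by (subst has_sum_reindex_bij_witness[where i="\<lambda>n. n - j" and j="\<lambda>m. j + m" and T="{j..}" and h=g and S=UNIV, symmetric]) auto
    hence "((\<lambda>n. g n * f j) has_sum (\<Sum>m. g (j+m)) * f j) {j..}" by (rule has_sum_cmult_left)
    thus ?thesis by (simp add: mult.commute)
  qed
  have "((\<lambda>j. f j * (\<Sum>m. g (j+m))) has_sum L) UNIV"
    by (rule has_sum_SigmaD[OF hs']) (use inner2 in simp)
  thus ?thesis unfolding L_def by (rule has_sum_imp_sums)
qed

lemma dco_shift: "dco (a + real j) b m = dco a b (j + m)"
  unfolding dco_def by (simp add: algebra_simps)

theorem mainTheorem16:
  fixes a b lam x :: real
  assumes "a > 0" and "b > 0" and "lam \<ge> 0" and "0 < x" and "x < 1"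
  shows "exp (- lam) * x powr a * (1 - x) powr b *
           (\<Sum>n. Gamma (a + b + real n) / (Gamma b * Gamma (a + 1 + real n)) * x ^ n *
                 (\<Sum>j\<le>n. lam ^ j / fact j))
         = noncentral_beta a b (2 * lam) x"
proof -
  note a = assms(1) and b = assms(2) and lam = assms(3) and x = assms(4,5)
  define g where "g = (\<lambda>n. dco a b n * x ^ n)"
  define f where "f = (\<lambda>j. lam ^ j / fact j)"
  have nx: "norm x < 1" using x by simp
  have g0: "g n \<ge> 0" for n unfolding g_def using dco_pos[OF a b, of n] x by simp
  have f0: "f j \<ge> 0" for j unfolding f_def using lam by simp
  have sg: "summable g" unfolding g_def by (rule dco_summable[OF a b nx])
  have es: "(\<lambda>j. f j) sums exp lam" using exp_converges[of lam]
    by (simp add: f_def divide_inverse mult.commute)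
  have eb: "(\<Sum>j\<le>n. f j) \<le> exp lam" for n
    using sum_le_suminf[OF sums_summable[OF es], of "{..n}"] f0 sums_unique[OF es] by simp
  have sm: "summable (\<lambda>n. g n * (\<Sum>j\<le>n. f j))"
  proof (rule summable_comparison_test[OF _ summable_mult2[OF sg, of "exp lam"]])
    show "\<exists>N. \<forall>n\<ge>N. norm (g n * (\<Sum>j\<le>n. f j)) \<le> g n * exp lam"
      using g0 f0 eb by (auto simp: abs_mult sum_nonneg intro!: mult_left_mono)
  qed
  have main: "(\<lambda>j. f j * (\<Sum>m. g (j+m))) sums (\<Sum>n. g n * (\<Sum>j\<le>n. f j))"
    by (rule swap_sums[OF f0 g0 sg sm])
  have Bpos: "Beta (a + real j) b > 0" for j unfolding Beta_def
    by (intro divide_pos_pos mult_pos_pos Gamma_real_pos) (use a b in auto)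
  have tj: "(1 / fact j) * (2 * lam / 2) ^ j * inc_beta_reg x (a + real j) b
       = x powr a * (1 - x) powr b * (f j * (\<Sum>m. g (j+m)))" for j
  proof -
    have h1: "inc_beta_reg x (a + real j) b = x powr (a + real j) * (1-x) powr b * Sser (a + real j) b x"
      unfolding inc_beta_reg_def using inc_beta_series[of "a + real j" b x] a b x Bpos[of j]
      by simp
    have h2: "x powr (a + real j) = x powr a * x ^ j"
      using x by (simp add: powr_add powr_realpow)
    have h3: "x ^ j * Sser (a + real j) b x = (\<Sum>m. g (j+m))"
    proof -
      have "x ^ j * Sser (a + real j) b x = (\<Sum>m. x ^ j * (dco (a + real j) b m * x ^ m))"
        unfolding Sser_def by (rule suminf_mult[symmetric]) (use dco_summable[OF _ b nx, of "a + real j"] a in simp)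
      also have "\<dots> = (\<Sum>m. g (j+m))" unfolding g_def dco_shift by (simp add: power_add algebra_simps)
      finally show ?thesis .
    qed
    have "inc_beta_reg x (a + real j) b = x powr a * (1-x) powr b * (x ^ j * Sser (a + real j) b x)"
      unfolding h1 h2 by (simp add: algebra_simps)
    also have "\<dots> = x powr a * (1-x) powr b * (\<Sum>m. g (j+m))" unfolding h3 ..
    finally show ?thesis unfolding f_def by (simp add: field_simps)
  qed
  have "(\<lambda>j. (1 / fact j) * (2 * lam / 2) ^ j * inc_beta_reg x (a + real j) b) sums
          (x powr a * (1 - x) powr b * (\<Sum>n. g n * (\<Sum>j\<le>n. f j)))"
    unfolding tj by (rule sums_mult[OF main])
  hence "noncentral_beta a b (2 * lam) x = exp (- lam) * (x powr a * (1 - x) powr b * (\<Sum>n. g n * (\<Sum>j\<le>n. f j)))"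
    unfolding noncentral_beta_def by (simp add: sums_unique[symmetric])
  thus ?thesis unfolding g_def f_def dco_def by (simp add: mult.assoc)
qed

end
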